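(* Let $S\in\mathcal{B}_A(\mathcal{H})$. Then $$\omega_A^2(S)\le\frac1{\sqrt2}\,\omega_A\big(S^{\sharp_A}S+i\,SS^{\sharp_A}\big).$$
   Context: $\mathcal{H}$ is a complex Hilbert space with inner product $\langle\cdot,\cdot\rangle$, and $A$ is a fixed nonzero positive bounded operator on $\mathcal{H}$. Set $\langle x,y\rangle_A=\langle Ax,y\rangle$ and $\|x\|_A=\|A^{1/2}x\|$. $\mathcal{B}_A(\mathcal{H})$ is the set of bounded operators $T$ for which there exists a bounded $S$ with $\langle Tx,y\rangle_A=\langle x,Sy\rangle_A$ for all $x,y$ (equivalently $\mathcal{R}(T^*A)\subseteq\mathcal{R}(A)$). For $T\in\mathcal{B}_A(\mathcal{H})$, $T^{\sharp_A}=A^\dagger T^*A$ ($A^\dagger$ the Moore–Penrose inverse) is the reduced solution of $AX=T^*A$. $\omega_A(T)=\sup\{|\langle Tx,x\rangle_A|:\|x\|_A=1\}$. *)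

theory Defs
  imports "HOL-Analysis.Analysis"
begin

text \<open>Complex Hilbert spaces: HOL-Analysis only has real inner product spaces,
so we introduce a type class for complex Hilbert spaces (complete complex inner
product spaces, inner product linear in the first argument).\<close>

class complex_hilbert = real_normed_vector + complete_space +
  fixes scaleC :: "complex \<Rightarrow> 'a \<Rightarrow> 'a" (infixr \<open>*\<^sub>C\<close> 75)
    and cinner :: "'a \<Rightarrow> 'a \<Rightarrow> complex"
  assumes scaleC_add_right: "a *\<^sub>C (x + y) = a *\<^sub>C x + a *\<^sub>C y"
    and scaleC_add_left: "(a + b) *\<^sub>C x = a *\<^sub>C x + b *\<^sub>C x"
    and scaleC_scaleC: "a *\<^sub>C (b *\<^sub>C x) = (a * b) *\<^sub>C x"
    and scaleC_one: "1 *\<^sub>C x = x"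
    and scaleR_scaleC: "scaleR r x = complex_of_real r *\<^sub>C x"
    and cinner_commute: "cinner x y = cnj (cinner y x)"
    and cinner_add_left: "cinner (x + y) z = cinner x z + cinner y z"
    and cinner_scaleC_left: "cinner (a *\<^sub>C x) y = a * cinner x y"
    and cinner_self_norm: "cinner x x = complex_of_real ((norm x)\<^sup>2)"

definition bounded_op :: "('a::complex_hilbert \<Rightarrow> 'a) \<Rightarrow> bool" where
  "bounded_op T \<longleftrightarrow> (\<forall>x y. T (x + y) = T x + T y) \<and> (\<forall>c x. T (c *\<^sub>C x) = c *\<^sub>C T x)
     \<and> (\<exists>K. \<forall>x. norm (T x) \<le> K * norm x)"

definition positive_op :: "('a::complex_hilbert \<Rightarrow> 'a) \<Rightarrow> bool" where
  "positive_op A \<longleftrightarrow> bounded_op A \<and>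
     (\<forall>x. Im (cinner (A x) x) = 0 \<and> 0 \<le> Re (cinner (A x) x))"

definition adjoint_op :: "('a::complex_hilbert \<Rightarrow> 'a) \<Rightarrow> ('a \<Rightarrow> 'a)" where
  "adjoint_op T = (THE S. \<forall>x y. cinner (T x) y = cinner x (S y))"

definition cinnerA :: "('a::complex_hilbert \<Rightarrow> 'a) \<Rightarrow> 'a \<Rightarrow> 'a \<Rightarrow> complex" where
  "cinnerA A x y = cinner (A x) y"

definition normA :: "('a::complex_hilbert \<Rightarrow> 'a) \<Rightarrow> 'a \<Rightarrow> real" where
  "normA A x = sqrt (Re (cinner (A x) x))"

definition BA :: "('a::complex_hilbert \<Rightarrow> 'a) \<Rightarrow> ('a \<Rightarrow> 'a) set" where
  "BA A = {T. bounded_op T \<and> (\<exists>S. bounded_op S \<and> (\<forall>x y. cinnerA A (T x) y = cinnerA A x (S y)))}"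

text \<open>\<open>T^{\<sharp>A} = A^\<dagger> T^* A\<close>: since \<open>R(T^* A) \<subseteq> R(A)\<close>, the Moore--Penrose inverse
  maps \<open>T^* A x\<close> to its unique preimage under A lying in \<open>N(A)^\<bottom>\<close>.\<close>
definition sharpA :: "('a::complex_hilbert \<Rightarrow> 'a) \<Rightarrow> ('a \<Rightarrow> 'a) \<Rightarrow> ('a \<Rightarrow> 'a)" where
  "sharpA A T = (\<lambda>x. THE z. (\<forall>w. A w = 0 \<longrightarrow> cinner z w = 0) \<and> A z = adjoint_op T (A x))"

definition omegaA :: "('a::complex_hilbert \<Rightarrow> 'a) \<Rightarrow> ('a \<Rightarrow> 'a) \<Rightarrow> real" where
  "omegaA A T = Sup {cmod (cinnerA A (T x) x) | x. normA A x = 1}"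

end

theory Submission imports Defs begin

lemma scaleC_zero_right [simp]: "(a::complex) *\<^sub>C (0::'a::complex_hilbert) = 0"
  using scaleC_add_right[of a "0::'a" 0] by simp

lemma scaleC_zero_left [simp]: "(0::complex) *\<^sub>C (x::'a::complex_hilbert) = 0"
  using scaleC_add_left[of 0 0 x] by simp

lemma scaleC_of_real: "complex_of_real r *\<^sub>C (x::'a::complex_hilbert) = r *\<^sub>R x"
  by (simp add: scaleR_scaleC)

lemma scaleC_minus_right [simp]: "(a::complex) *\<^sub>C (- (x::'a::complex_hilbert)) = - (a *\<^sub>C x)"
  using scaleC_add_right[of a x "-x"] by (metis add.right_inverse minus_unique scaleC_zero_right)

lemma scaleC_diff_right: "(a::complex) *\<^sub>C ((x::'a::complex_hilbert) - y) = a *\<^sub>C x - a *\<^sub>C y"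
  using scaleC_add_right[of a x "-y"] by simp

lemma cinner_zero_left [simp]: "cinner (0::'a::complex_hilbert) y = 0"
  using cinner_add_left[of "0::'a" 0 y] by simp

lemma cinner_minus_left [simp]: "cinner (- (x::'a::complex_hilbert)) y = - cinner x y"
  using cinner_add_left[of x "-x" y] by (metis add.right_inverse minus_unique cinner_zero_left)

lemma cinner_diff_left: "cinner ((x::'a::complex_hilbert) - z) y = cinner x y - cinner z y"
  using cinner_add_left[of x "-z" y] by simp

lemma cinner_add_right: "cinner (x::'a::complex_hilbert) (y + z) = cinner x y + cinner x z"
  by (metis cinner_add_left cinner_commute complex_cnj_add)

lemma cinner_zero_right [simp]: "cinner (x::'a::complex_hilbert) 0 = 0"
  by (metis cinner_commute cinner_zero_left complex_cnj_zero)

lemma cinner_minus_right [simp]: "cinner (x::'a::complex_hilbert) (- y) = - cinner x y"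
  by (metis cinner_commute cinner_minus_left complex_cnj_minus)

lemma cinner_diff_right: "cinner (x::'a::complex_hilbert) (y - z) = cinner x y - cinner x z"
  using cinner_add_right[of x y "-z"] by simp

lemma cinner_scaleC_right: "cinner (x::'a::complex_hilbert) (a *\<^sub>C y) = cnj a * cinner x y"
  by (metis cinner_commute cinner_scaleC_left complex_cnj_mult)

lemma cinner_self_Re: "Re (cinner (x::'a::complex_hilbert) x) = (norm x)\<^sup>2"
  by (simp add: cinner_self_norm)

lemma cinner_self_zero_iff: "cinner (x::'a::complex_hilbert) x = 0 \<longleftrightarrow> x = 0"
  by (simp add: cinner_self_norm)

lemma cinner_eq_zero_all: "(\<And>w. cinner w (x::'a::complex_hilbert) = cinner w y) \<Longrightarrow> x = y"
proof -
  assume h: "\<And>w. cinner w x = cinner w y"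
  have "cinner (x - y) (x - y) = 0" using h[of "x-y"] by (simp add: cinner_diff_right)
  thus ?thesis by (simp add: cinner_self_zero_iff)
qed

lemma bounded_op_add: "bounded_op T \<Longrightarrow> T (x + y) = T x + T y"
  by (simp add: bounded_op_def)
lemma bounded_op_scaleC: "bounded_op T \<Longrightarrow> T (c *\<^sub>C x) = c *\<^sub>C T x"
  by (simp add: bounded_op_def)
lemma bounded_op_zero: "bounded_op T \<Longrightarrow> T 0 = 0"
  using bounded_op_add[of T 0 0] by simp
lemma bounded_op_minus: "bounded_op T \<Longrightarrow> T (- x) = - T x"
  using bounded_op_add[of T x "-x"] bounded_op_zero[of T] by (metis add.right_inverse minus_unique)
lemma bounded_op_diff: "bounded_op T \<Longrightarrow> T (x - y) = T x - T y"
  using bounded_op_add[of T x "-y"] bounded_op_minus[of T y] by simp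
lemma bounded_op_scaleR: "bounded_op T \<Longrightarrow> T (r *\<^sub>R x) = r *\<^sub>R T x"
  by (simp add: scaleR_scaleC bounded_op_scaleC)
lemma bounded_op_bound: fixes T :: "'a::complex_hilbert \<Rightarrow> 'a" shows "bounded_op T \<Longrightarrow> \<exists>K>0. \<forall>x. norm (T x) \<le> K * norm x"
proof -
  assume "bounded_op T"
  then obtain K where K: "\<forall>x. norm (T x) \<le> K * norm x" by (auto simp: bounded_op_def)
  have "\<forall>x. norm (T x) \<le> max K 1 * norm x"
  proof
    fix x :: 'a
    have "K * norm x \<le> max K 1 * norm x" by (simp add: mult_right_mono)
    thus "norm (T x) \<le> max K 1 * norm x" using K by (meson order_trans)
  qed
  thus ?thesis by (intro exI[of _ "max K 1"]) auto
qed
lemma bounded_op_bounded_linear: "bounded_op T \<Longrightarrow> bounded_linear T"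
proof -
  assume b: "bounded_op T"
  then obtain K where K: "\<forall>x. norm (T x) \<le> K * norm x" by (auto simp: bounded_op_def)
  show ?thesis
    by (rule bounded_linear_intro[of _ K]) (use b K in \<open>auto simp: bounded_op_add bounded_op_scaleR mult.commute\<close>)
qed
lemma bounded_op_id: "bounded_op (\<lambda>x. x)"
  unfolding bounded_op_def by (auto intro: exI[of _ 1])
lemma positive_op_id: "positive_op (\<lambda>x::'a::complex_hilbert. x)"
  unfolding positive_op_def by (simp add: bounded_op_id cinner_self_norm)
lemma bounded_op_comp: "bounded_op S \<Longrightarrow> bounded_op T \<Longrightarrow> bounded_op (\<lambda>x. S (T x))"
proof -
  assume s: "bounded_op S" and t: "bounded_op T"
  obtain K1 where K1: "K1>0" "\<forall>x. norm (S x) \<le> K1 * norm x" using bounded_op_bound[OF s] by auto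
  obtain K2 where K2: "K2>0" "\<forall>x. norm (T x) \<le> K2 * norm x" using bounded_op_bound[OF t] by auto
  have "\<forall>x. norm (S (T x)) \<le> (K1*K2) * norm x"
  proof
    fix x
    have "norm (S (T x)) \<le> K1 * norm (T x)" using K1 by auto
    also have "\<dots> \<le> K1 * (K2 * norm x)" using K1 K2 by (simp add: mult_left_mono)
    finally show "norm (S (T x)) \<le> (K1*K2) * norm x" by (simp add: mult.assoc)
  qed
  thus ?thesis using s t unfolding bounded_op_def by auto
qed


lemma positive_selfadj:
  fixes A :: "'a::complex_hilbert \<Rightarrow> 'a"
  assumes "positive_op A"
  shows "cinner (A x) y = cinner x (A y)"
proof -
  have b: "bounded_op A" and r: "\<And>z. Im (cinner (A z) z) = 0" using assms by (auto simp: positive_op_def)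
  define P where "P = cinner (A x) y"
  define Q where "Q = cinner (A y) x"
  have e1: "cinner (A (x + y)) (x + y) = cinner (A x) x + P + Q + cinner (A y) y"
    by (simp add: P_def Q_def bounded_op_add[OF b] cinner_add_left cinner_add_right)
  have e2: "cinner (A (x + \<i> *\<^sub>C y)) (x + \<i> *\<^sub>C y) = cinner (A x) x - \<i> * P + \<i> * Q + cinner (A y) y"
    by (simp add: P_def Q_def bounded_op_add[OF b] bounded_op_scaleC[OF b] cinner_add_left cinner_add_right
        cinner_scaleC_left cinner_scaleC_right algebra_simps)
  have i1: "Im P + Im Q = 0" using r[of "x+y"] r[of x] r[of y] e1 by simp
  have i2: "Re Q - Re P = 0" using r[of "x+\<i> *\<^sub>C y"] r[of x] r[of y] e2 by simp
  have "Q = cnj P" using i1 i2 by (simp add: complex_eq_iff)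
  hence "cinner x (A y) = P" by (metis Q_def cinner_commute complex_cnj_cnj)
  thus ?thesis by (simp add: P_def)
qed

lemma positive_Re_nonneg: "positive_op A \<Longrightarrow> 0 \<le> Re (cinner (A x) x)"
  by (simp add: positive_op_def)
lemma positive_Im: "positive_op A \<Longrightarrow> Im (cinner (A x) x) = 0"
  by (simp add: positive_op_def)
lemma positive_real: "positive_op A \<Longrightarrow> cinner (A x) x = complex_of_real (Re (cinner (A x) x))"
  by (simp add: positive_op_def complex_eq_iff)

lemma normA_sq: "positive_op A \<Longrightarrow> (normA A x)\<^sup>2 = Re (cinner (A x) x)"
  by (simp add: normA_def positive_Re_nonneg)

lemma expand_form:
  fixes A :: "'a::complex_hilbert \<Rightarrow> 'a"
  assumes "positive_op A"
  shows "Re (cinner (A (u - c *\<^sub>C v)) (u - c *\<^sub>C v)) =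
     Re (cinner (A u) u) - 2 * Re (cnj c * cinner (A u) v) + (cmod c)\<^sup>2 * Re (cinner (A v) v)"
proof -
  have b: "bounded_op A" using assms by (simp add: positive_op_def)
  have sa: "cinner (A v) u = cnj (cinner (A u) v)"
    using positive_selfadj[OF assms, of v u] by (metis cinner_commute)
  have "cinner (A (u - c *\<^sub>C v)) (u - c *\<^sub>C v) =
     cinner (A u) u - cnj c * cinner (A u) v - c * cinner (A v) u + (c * cnj c) * cinner (A v) v"
    by (simp add: bounded_op_diff[OF b] bounded_op_scaleC[OF b] cinner_diff_left cinner_diff_right
        cinner_scaleC_left cinner_scaleC_right algebra_simps)
  also have "\<dots> = cinner (A u) u - (cnj c * cinner (A u) v + cnj (cnj c * cinner (A u) v))
        + complex_of_real ((cmod c)\<^sup>2) * cinner (A v) v"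
    using complex_norm_square[of c] by (simp add: sa)
  finally show ?thesis by (simp add: complex_add_cnj)
qed

lemma CS_A:
  fixes A :: "'a::complex_hilbert \<Rightarrow> 'a"
  assumes "positive_op A"
  shows "cmod (cinner (A x) y) \<le> normA A x * normA A y"
proof -
  define p where "p = cinner (A x) y"
  define a where "a = Re (cinner (A x) x)"
  define b where "b = Re (cinner (A y) y)"
  have a0: "0 \<le> a" and b0: "0 \<le> b" using assms by (auto simp: a_def b_def positive_Re_nonneg)
  have ex: "0 \<le> a - 2 * Re (cnj c * p) + (cmod c)\<^sup>2 * b" for c
    using expand_form[OF assms, of x c y] positive_Re_nonneg[OF assms, of "x - c *\<^sub>C y"]
    by (simp add: a_def b_def p_def)
  have key: "(cmod p)\<^sup>2 \<le> a * b"
  proof (cases "b = 0")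
    case True
    show ?thesis
    proof (rule ccontr)
      assume "\<not> ?thesis"
      hence pn: "p \<noteq> 0" using True by auto
      define t where "t = (a + 1) / (2 * (cmod p)\<^sup>2)"
      have "Re (cnj (complex_of_real t * p) * p) = t * (cmod p)\<^sup>2"
        using cmod_power2[of p] by (simp add: power2_eq_square algebra_simps)
      hence "0 \<le> a - 2 * (t * (cmod p)\<^sup>2)" using ex[of "complex_of_real t * p"] True by simp
      moreover have "2 * (t * (cmod p)\<^sup>2) = a + 1" using pn by (simp add: t_def)
      ultimately show False by simp
    qed
  next
    case False
    hence bp: "b > 0" using b0 by simp
    define c where "c = p / complex_of_real b"
    have "cnj c * p = complex_of_real ((cmod p)\<^sup>2 / b)"
      using complex_norm_square[of p] by (simp add: c_def mult.commute)
    moreover have "(cmod c)\<^sup>2 = (cmod p)\<^sup>2 / b\<^sup>2" by (simp add: c_def norm_divide power_divide)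
    ultimately have "0 \<le> a - 2 * ((cmod p)\<^sup>2 / b) + (cmod p)\<^sup>2 / b\<^sup>2 * b" using ex[of c] by simp
    also have "(cmod p)\<^sup>2 / b\<^sup>2 * b = (cmod p)\<^sup>2 / b" using bp by (simp add: power2_eq_square)
    finally have "(cmod p)\<^sup>2 / b \<le> a" by simp
    thus ?thesis using bp by (simp add: divide_le_eq mult.commute)
  qed
  have "cmod p = sqrt ((cmod p)\<^sup>2)" by simp
  also have "\<dots> \<le> sqrt (a * b)" using key by (rule real_sqrt_le_mono)
  also have "\<dots> = normA A x * normA A y" by (simp add: normA_def a_def b_def real_sqrt_mult)
  finally show ?thesis by (simp add: p_def)
qed

lemma CS_plain: "cmod (cinner (x::'a::complex_hilbert) y) \<le> norm x * norm y"
  using CS_A[OF positive_op_id, of x y] by (simp add: normA_def cinner_self_Re)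


lemma parallelogram:
  "(norm ((u::'a::complex_hilbert) + v))\<^sup>2 + (norm (u - v))\<^sup>2 = 2 * (norm u)\<^sup>2 + 2 * (norm v)\<^sup>2"
proof -
  have "cinner (u + v) (u + v) + cinner (u - v) (u - v) = 2 * cinner u u + 2 * cinner v v"
    by (simp add: cinner_add_left cinner_add_right cinner_diff_left cinner_diff_right)
  hence "Re (cinner (u + v) (u + v)) + Re (cinner (u - v) (u - v)) = 2 * Re (cinner u u) + 2 * Re (cinner v v)"
    by (metis plus_complex.sel(1) Re_complex_of_real times_complex.sel(1) Im_complex_of_real
        mult_zero_left diff_zero of_real_numeral)
  thus ?thesis by (simp add: cinner_self_Re)
qed

lemma projection_exists:
  fixes M :: "'a::complex_hilbert set"
  assumes cl: "closed M" and z: "0 \<in> M"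
    and ad: "\<And>u v. u \<in> M \<Longrightarrow> v \<in> M \<Longrightarrow> u + v \<in> M"
    and sc: "\<And>c u. u \<in> M \<Longrightarrow> c *\<^sub>C u \<in> M"
  shows "\<exists>m\<in>M. \<forall>y\<in>M. cinner (x - m) y = 0"
proof -
  define D where "D = (\<lambda>m. norm (x - m)) ` M"
  define d where "d = Inf D"
  have Dne: "D \<noteq> {}" using z by (auto simp: D_def)
  have Dbdd: "bdd_below D" unfolding D_def by (rule bdd_belowI[of _ 0]) auto
  have dle: "d \<le> norm (x - m)" if "m \<in> M" for m
    unfolding d_def using Dbdd that by (auto simp: D_def intro!: cInf_lower)
  have d0: "0 \<le> d" using dle[OF z] unfolding d_def
    using Dne by (auto simp: D_def intro!: cInf_greatest)
  have "\<exists>m\<in>M. (norm (x - m))\<^sup>2 < d\<^sup>2 + 1 / real (Suc n)" for n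
  proof -
    have "d < sqrt (d\<^sup>2 + 1 / real (Suc n))"
      using d0 by (metis add_pos_pos less_add_same_cancel1 of_nat_0_less_iff real_less_rsqrt zero_less_Suc
          zero_less_divide_1_iff)
    then obtain e where "e \<in> D" "e < sqrt (d\<^sup>2 + 1 / real (Suc n))"
      using cInf_lessD[OF Dne] unfolding d_def by blast
    then obtain m where m: "m \<in> M" "norm (x - m) < sqrt (d\<^sup>2 + 1 / real (Suc n))"
      by (auto simp: D_def)
    hence "(norm (x - m))\<^sup>2 < d\<^sup>2 + 1 / real (Suc n)"
      by (metis norm_ge_zero real_sqrt_less_iff real_sqrt_pow2_iff real_less_rsqrt less_le_trans
          zero_le_power2 add_nonneg_nonneg of_nat_0_le_iff zero_le_divide_1_iff real_sqrt_abs
          abs_norm_cancel real_sqrt_less_mono power2_less_imp_less not_le)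
    thus ?thesis using m by auto
  qed
  then obtain mm where mm: "\<And>n. mm n \<in> M" "\<And>n. (norm (x - mm n))\<^sup>2 < d\<^sup>2 + 1 / real (Suc n)"
    by metis
  have cb: "(norm (mm i - mm j))\<^sup>2 \<le> 2 / real (Suc i) + 2 / real (Suc j)" for i j
  proof -
    define u where "u = x - mm i"
    define v where "v = x - mm j"
    have mid: "(1/2) *\<^sub>R (mm i + mm j) \<in> M" using ad[OF mm(1) mm(1)] sc by (simp add: scaleR_scaleC)
    have "u + v = 2 *\<^sub>R (x - (1/2) *\<^sub>R (mm i + mm j))"
      by (simp add: u_def v_def algebra_simps) (metis scaleR_2)
    hence "norm (u + v) = 2 * norm (x - (1/2) *\<^sub>R (mm i + mm j))" by simp
    hence "2 * d \<le> norm (u + v)" using dle[OF mid] by simp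
    hence "(2 * d)\<^sup>2 \<le> (norm (u + v))\<^sup>2" using d0 by (intro power_mono) auto
    moreover have "u - v = mm j - mm i" by (simp add: u_def v_def)
    moreover note parallelogram[of u v]
    moreover have "(norm (mm j - mm i)) = norm (mm i - mm j)" by (simp add: norm_minus_commute)
    ultimately show ?thesis using mm(2)[of i] mm(2)[of j] by (simp add: u_def v_def power_mult_distrib)
  qed
  have "Cauchy mm"
  proof (rule metric_CauchyI)
    fix e :: real assume e: "0 < e"
    obtain N :: nat where N: "4 / e\<^sup>2 < real N" using reals_Archimedean2 by blast
    have "4 / e\<^sup>2 < real (Suc N)" using N by simp
    hence "4 < real (Suc N) * e\<^sup>2" using e by (simp add: divide_less_eq)
    hence Np: "4 / real (Suc N) < e\<^sup>2" by (simp add: divide_less_eq mult.commute)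
    show "\<exists>N. \<forall>m\<ge>N. \<forall>n\<ge>N. dist (mm m) (mm n) < e"
    proof (intro exI allI impI)
      fix i j assume ij: "N \<le> i" "N \<le> j"
      have "2 / real (Suc i) \<le> 2 / real (Suc N)" "2 / real (Suc j) \<le> 2 / real (Suc N)"
        using ij by (simp_all add: frac_le)
      hence "(norm (mm i - mm j))\<^sup>2 < e\<^sup>2" using cb[of i j] Np by simp
      hence "norm (mm i - mm j) < e" using e by (simp add: power_less_imp_less_base)
      thus "dist (mm i) (mm j) < e" by (simp add: dist_norm)
    qed
  qed
  then obtain m where lim: "mm \<longlonglongrightarrow> m" using Cauchy_convergent convergent_def by blast
  have mM: "m \<in> M" using closed_sequentially[OF cl] mm(1) lim by blast
  have "(\<lambda>n. (norm (x - mm n))\<^sup>2) \<longlonglongrightarrow> (norm (x - m))\<^sup>2"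
    by (intro tendsto_intros lim)
  moreover have "(\<lambda>n. d\<^sup>2 + 1 / real (Suc n)) \<longlonglongrightarrow> d\<^sup>2"
    using tendsto_add[OF tendsto_const[of "d\<^sup>2"] LIMSEQ_inverse_real_of_nat] by (simp add: inverse_eq_divide)
  ultimately have mind: "(norm (x - m))\<^sup>2 \<le> d\<^sup>2"
    by (rule LIMSEQ_le) (use mm(2) less_imp_le in auto)
  show ?thesis
  proof (intro bexI[OF _ mM] ballI)
    fix y assume yM: "y \<in> M"
    define e where "e = x - m"
    define p where "p = cinner e y"
    show "cinner (x - m) y = 0"
    proof (cases "y = 0")
      case True thus ?thesis by simp
    next
      case False
      define r where "r = (norm y)\<^sup>2"
      have rp: "r > 0" using False by (simp add: r_def)
      define c where "c = p / complex_of_real r"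
      have "m + c *\<^sub>C y \<in> M" using ad[OF mM sc[OF yM]] .
      hence "d \<le> norm (x - (m + c *\<^sub>C y))" by (rule dle)
      hence "d\<^sup>2 \<le> (norm (e - c *\<^sub>C y))\<^sup>2" using d0 by (simp add: e_def power_mono algebra_simps)
      also have "(norm (e - c *\<^sub>C y))\<^sup>2 =
          (norm e)\<^sup>2 - 2 * Re (cnj c * p) + (cmod c)\<^sup>2 * (norm y)\<^sup>2"
        using expand_form[OF positive_op_id, of e c y] by (simp add: cinner_self_Re p_def)
      also have "cnj c * p = complex_of_real ((cmod p)\<^sup>2 / r)"
        using complex_norm_square[of p] by (simp add: c_def mult.commute)
      also have "(cmod c)\<^sup>2 = (cmod p)\<^sup>2 / r\<^sup>2" by (simp add: c_def norm_divide power_divide)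
      finally have "d\<^sup>2 \<le> (norm e)\<^sup>2 - 2 * ((cmod p)\<^sup>2 / r) + (cmod p)\<^sup>2 / r\<^sup>2 * r"
        by (simp add: r_def)
      also have "(cmod p)\<^sup>2 / r\<^sup>2 * r = (cmod p)\<^sup>2 / r" using rp by (simp add: power2_eq_square)
      finally have "(cmod p)\<^sup>2 / r \<le> 0" using mind by (simp add: e_def)
      hence "(cmod p)\<^sup>2 \<le> 0" using rp by (simp add: divide_le_0_iff)
      hence "p = 0" by simp
      thus ?thesis by (simp add: p_def e_def)
    qed
  qed
qed


lemma closed_kernel:
  fixes f :: "'a::real_normed_vector \<Rightarrow> 'b::real_normed_vector"
  assumes "bounded_linear f"
  shows "closed {x. f x = 0}"
  unfolding closed_sequential_limits
proof (intro allI impI, elim conjE)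
  fix s l assume s: "\<forall>n. s n \<in> {x. f x = 0}" and lim: "s \<longlonglongrightarrow> l"
  have "(\<lambda>n. f (s n)) \<longlonglongrightarrow> f l" using bounded_linear.tendsto[OF assms lim] .
  moreover have "(\<lambda>n. f (s n)) = (\<lambda>n. 0)" using s by auto
  ultimately have "(\<lambda>n. (0::'b)) \<longlonglongrightarrow> f l" by simp
  hence "f l = 0" using LIMSEQ_unique tendsto_const by blast
  thus "l \<in> {x. f x = 0}" by simp
qed

lemma riesz:
  fixes f :: "'a::complex_hilbert \<Rightarrow> complex"
  assumes add: "\<And>x y. f (x + y) = f x + f y" and sc: "\<And>c x. f (c *\<^sub>C x) = c * f x"
    and bd: "\<And>x. cmod (f x) \<le> K * norm x"
  shows "\<exists>z. \<forall>x. f x = cinner x z"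
proof (cases "\<forall>x. f x = 0")
  case True thus ?thesis by (intro exI[of _ 0]) simp
next
  case False
  then obtain u where u: "f u \<noteq> 0" by auto
  have bl: "bounded_linear f"
    by (rule bounded_linear_intro[of _ K]) (auto simp: add scaleR_scaleC sc bd mult.commute scaleR_conv_of_real)
  define N where "N = {x. f x = 0}"
  have f0: "f 0 = 0" using add[of 0 0] by simp
  have "\<exists>m\<in>N. \<forall>y\<in>N. cinner (u - m) y = 0"
    by (rule projection_exists) (auto simp: N_def closed_kernel[OF bl] f0 add sc)
  then obtain m where m: "f m = 0" "\<And>y. f y = 0 \<Longrightarrow> cinner (u - m) y = 0" by (auto simp: N_def)
  define w where "w = u - m"
  have fw: "f w \<noteq> 0" using u m add[of w m] by (simp add: w_def)
  have fdiff: "f (a - b) = f a - f b" for a b using add[of "a - b" b] by simp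
  have wn: "cinner w w \<noteq> 0" using fw f0 by (auto simp: cinner_self_zero_iff)
  show ?thesis
  proof (intro exI allI)
    fix x
    define t where "t = f x / f w"
    have "f (x - t *\<^sub>C w) = 0" using fw by (simp add: fdiff sc t_def)
    hence "cinner w (x - t *\<^sub>C w) = 0" using m(2) by (simp add: w_def)
    hence "cinner (x - t *\<^sub>C w) w = 0" by (metis cinner_commute complex_cnj_zero)
    hence "cinner x w = t * cinner w w" by (simp add: cinner_diff_left cinner_scaleC_left)
    hence "f x = cinner x w * f w / cinner w w" using wn fw by (simp add: t_def field_simps)
    also have "\<dots> = cinner x (cnj (f w / cinner w w) *\<^sub>C w)"
      by (simp add: cinner_scaleC_right)
    finally show "f x = cinner x (cnj (f w / cinner w w) *\<^sub>C w)" .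
  qed
qed

lemma adjoint_exists:
  fixes T :: "'a::complex_hilbert \<Rightarrow> 'a"
  assumes "bounded_op T"
  shows "cinner (T x) y = cinner x (adjoint_op T y)"
proof -
  obtain K where K: "\<forall>x. norm (T x) \<le> K * norm x" using assms by (auto simp: bounded_op_def)
  have "\<exists>z. \<forall>x. cinner (T x) y = cinner x z" for y
  proof (rule riesz[of _ "K * norm y"])
    show "cinner (T (a + b)) y = cinner (T a) y + cinner (T b) y" for a b
      by (simp add: bounded_op_add[OF assms] cinner_add_left)
    show "cinner (T (c *\<^sub>C a)) y = c * cinner (T a) y" for c a
      by (simp add: bounded_op_scaleC[OF assms] cinner_scaleC_left)
    show "cmod (cinner (T a) y) \<le> K * norm y * norm a" for a
    proof -
      have "cmod (cinner (T a) y) \<le> norm (T a) * norm y" by (rule CS_plain)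
      also have "\<dots> \<le> K * norm a * norm y" using K by (simp add: mult_right_mono)
      finally show ?thesis by (simp add: algebra_simps)
    qed
  qed
  then obtain S where S: "\<And>x y. cinner (T x) y = cinner x (S y)" by metis
  have "\<exists>!S. \<forall>x y. cinner (T x) y = cinner x (S y)"
  proof (rule ex1I[of _ S])
    show "\<forall>x y. cinner (T x) y = cinner x (S y)" using S by auto
    fix S' assume "\<forall>x y. cinner (T x) y = cinner x (S' y)"
    thus "S' = S" using S by (intro ext cinner_eq_zero_all) metis
  qed
  hence "\<forall>x y. cinner (T x) y = cinner x (adjoint_op T y)"
    unfolding adjoint_op_def by (rule theI')
  thus ?thesis by auto
qed

lemma sharp_prop:
  fixes A S :: "'a::complex_hilbert \<Rightarrow> 'a"
  assumes pA: "positive_op A" and SB: "S \<in> BA A"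
  shows "cinner (A (sharpA A S x)) y = cinner (A x) (S y)"
proof -
  have bA: "bounded_op A" using pA by (simp add: positive_op_def)
  obtain S0 where bS: "bounded_op S" and bS0: "bounded_op S0"
    and S0: "\<And>x y. cinner (A (S x)) y = cinner (A x) (S0 y)"
    using SB by (auto simp: BA_def cinnerA_def)
  define N where "N = {w. A w = 0}"
  have "\<exists>m\<in>N. \<forall>w\<in>N. cinner (S0 x - m) w = 0"
    by (rule projection_exists)
      (auto simp: N_def closed_kernel[OF bounded_op_bounded_linear[OF bA]] bounded_op_zero[OF bA]
        bounded_op_add[OF bA] bounded_op_scaleC[OF bA])
  then obtain m where m: "A m = 0" "\<And>w. A w = 0 \<Longrightarrow> cinner (S0 x - m) w = 0" by (auto simp: N_def)
  have key: "A (S0 x) = adjoint_op S (A x)"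
  proof (rule cinner_eq_zero_all)
    fix w
    have "cinner w (A (S0 x)) = cinner (A w) (S0 x)" using positive_selfadj[OF pA] by simp
    also have "\<dots> = cinner (A (S w)) x" using S0 by simp
    also have "\<dots> = cinner (S w) (A x)" using positive_selfadj[OF pA] by simp
    also have "\<dots> = cinner w (adjoint_op S (A x))" using adjoint_exists[OF bS] by simp
    finally show "cinner w (A (S0 x)) = cinner w (adjoint_op S (A x))" .
  qed
  define P where "P = (\<lambda>z. (\<forall>w. A w = 0 \<longrightarrow> cinner z w = 0) \<and> A z = adjoint_op S (A x))"
  have P1: "P (S0 x - m)" using m key by (auto simp: P_def bounded_op_diff[OF bA])
  have "\<exists>!z. P z"
  proof (rule ex1I[of _ "S0 x - m"])
    show "P (S0 x - m)" by (rule P1)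
    fix z assume Pz: "P z"
    define q where "q = z - (S0 x - m)"
    have Aq: "A q = 0" using Pz P1 by (simp add: P_def q_def bounded_op_diff[OF bA])
    have "cinner q q = 0" using Pz P1 Aq unfolding P_def q_def by (simp add: cinner_diff_left)
    thus "z = S0 x - m" by (simp add: cinner_self_zero_iff q_def)
  qed
  hence "P (sharpA A S x)" unfolding sharpA_def P_def[symmetric] by (rule theI')
  hence "A (sharpA A S x) = adjoint_op S (A x)" by (simp add: P_def)
  hence "cinner (A (sharpA A S x)) y = cinner (adjoint_op S (A x)) y" by simp
  also have "\<dots> = cnj (cinner y (adjoint_op S (A x)))" by (rule cinner_commute)
  also have "\<dots> = cnj (cinner (S y) (A x))" using adjoint_exists[OF bS] by simp
  also have "\<dots> = cinner (A x) (S y)" by (metis cinner_commute)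
  finally show ?thesis .
qed


lemma logconv_bound:
  fixes b :: "nat \<Rightarrow> real"
  assumes nn: "\<And>k. 0 \<le> b k"
    and lc: "\<And>k. (b (Suc k))\<^sup>2 \<le> b k * b (Suc (Suc k))"
    and ub: "\<And>k. b k \<le> c * K ^ k"
    and Kp: "K > 0"
  shows "b 1 \<le> K * b 0"
proof (cases "b 0 = 0")
  case True
  have "(b 1)\<^sup>2 \<le> 0" using lc[of 0] True by simp
  hence "b 1 = 0" by simp
  thus ?thesis using True by simp
next
  case False
  hence b0: "b 0 > 0" using nn[of 0] by simp
  define r where "r = b 1 / b 0"
  have r0: "0 \<le> r" using nn[of 1] b0 by (simp add: r_def)
  have step: "r * b k \<le> b (Suc k)" for k
  proof (induction k)
    case 0 thus ?case using b0 by (simp add: r_def)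
  next
    case (Suc k)
    show ?case
    proof (cases "b k = 0")
      case True
      have "(b (Suc k))\<^sup>2 \<le> 0" using lc[of k] True by simp
      hence "b (Suc k) = 0" by simp
      thus ?thesis using nn by simp
    next
      case False
      hence bk: "b k > 0" using nn[of k] by simp
      have "b k * (r * b (Suc k)) = (r * b k) * b (Suc k)" by (simp add: algebra_simps)
      also have "\<dots> \<le> b (Suc k) * b (Suc k)" using Suc.IH nn[of "Suc k"] by (rule mult_right_mono)
      also have "\<dots> = (b (Suc k))\<^sup>2" by (simp add: power2_eq_square)
      also have "\<dots> \<le> b k * b (Suc (Suc k))" by (rule lc)
      finally show ?thesis using bk by (simp add: mult_le_cancel_left)
    qed
  qed
  have pw: "r ^ k * b 0 \<le> b k" for k
  proof (induction k)
    case 0 thus ?case by simp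
  next
    case (Suc k)
    have "r ^ Suc k * b 0 = r * (r ^ k * b 0)" by simp
    also have "\<dots> \<le> r * b k" using Suc.IH r0 by (rule mult_left_mono)
    also have "\<dots> \<le> b (Suc k)" by (rule step)
    finally show ?case .
  qed
  show ?thesis
  proof (rule ccontr)
    assume "\<not> ?thesis"
    hence rK: "r > K" using b0 by (simp add: r_def field_simps)
    hence "1 < r / K" using Kp by simp
    then obtain n where n: "c / b 0 < (r / K) ^ n" using real_arch_pow by blast
    have "r ^ n * b 0 \<le> c * K ^ n" using pw[of n] ub[of n] by linarith
    hence "(r / K) ^ n \<le> c / b 0" using b0 Kp by (simp add: power_divide field_simps)
    thus False using n by simp
  qed
qed

lemma normA_le_norm:
  fixes A :: "'a::complex_hilbert \<Rightarrow> 'a"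
  assumes pA: "positive_op A" and KA: "\<And>z. norm (A z) \<le> KA * norm z" and KA0: "KA > 0"
  shows "normA A z \<le> sqrt KA * norm z"
proof -
  have "(normA A z)\<^sup>2 = Re (cinner (A z) z)" by (rule normA_sq[OF pA])
  also have "\<dots> \<le> cmod (cinner (A z) z)" by (rule complex_Re_le_cmod)
  also have "\<dots> \<le> norm (A z) * norm z" by (rule CS_plain)
  also have "\<dots> \<le> KA * norm z * norm z" using KA by (simp add: mult_right_mono)
  also have "\<dots> = (sqrt KA * norm z)\<^sup>2" using KA0 by (simp add: power2_eq_square power_mult_distrib)
  finally show ?thesis
    using KA0 by (metis power2_le_imp_le mult_nonneg_nonneg norm_ge_zero real_sqrt_ge_zero less_imp_le)
qed

lemma A_bounded:
  fixes A S :: "'a::complex_hilbert \<Rightarrow> 'a"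
  assumes pA: "positive_op A" and SB: "S \<in> BA A"
  shows "\<exists>C\<ge>0. \<forall>y. (normA A (S y))\<^sup>2 \<le> C * (normA A y)\<^sup>2"
proof -
  have bA: "bounded_op A" using pA by (simp add: positive_op_def)
  obtain S0 where bS: "bounded_op S" and bS0: "bounded_op S0"
    and S0: "\<And>x y. cinner (A (S x)) y = cinner (A x) (S0 y)"
    using SB by (auto simp: BA_def cinnerA_def)
  define B where "B = (\<lambda>z. S0 (S z))"
  have bB: "bounded_op B" unfolding B_def by (rule bounded_op_comp[OF bS0 bS])
  obtain KB where KB: "KB > 0" "\<And>z. norm (B z) \<le> KB * norm z" using bounded_op_bound[OF bB] by auto
  obtain KA where KA: "KA > 0" "\<And>z. norm (A z) \<le> KA * norm z" using bounded_op_bound[OF bA] by auto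
  have sa: "\<And>a b. cinner (A a) b = cinner a (A b)" using positive_selfadj[OF pA] .
  have Bsym: "cinner (A (B u)) v = cinner (A u) (B v)" for u v
  proof -
    have "cinner (A (B u)) v = cinner (S0 (S u)) (A v)" using sa by (simp add: B_def)
    also have "\<dots> = cnj (cinner (A v) (S0 (S u)))" by (rule cinner_commute)
    also have "\<dots> = cnj (cinner (A (S v)) (S u))" using S0 by simp
    also have "\<dots> = cinner (S u) (A (S v))" by (metis cinner_commute)
    also have "\<dots> = cinner (A (S u)) (S v)" using sa by simp
    also have "\<dots> = cinner (A u) (B v)" using S0 by (simp add: B_def)
    finally show ?thesis .
  qed
  have "(normA A (S y))\<^sup>2 \<le> KB * (normA A y)\<^sup>2" for y
  proof -
    define b where "b = (\<lambda>k. normA A ((B ^^ k) y))"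
    have nn: "0 \<le> b k" for k by (simp add: b_def normA_def positive_Re_nonneg[OF pA])
    have nB: "norm ((B ^^ k) y) \<le> KB ^ k * norm y" for k
    proof (induction k)
      case 0 thus ?case by simp
    next
      case (Suc k)
      have "norm ((B ^^ Suc k) y) \<le> KB * norm ((B ^^ k) y)" using KB(2) by simp
      also have "\<dots> \<le> KB * (KB ^ k * norm y)" using Suc.IH KB(1) by (simp add: mult_left_mono)
      finally show ?case by simp
    qed
    have ub: "b k \<le> (sqrt KA * norm y) * KB ^ k" for k
    proof -
      have "b k \<le> sqrt KA * norm ((B ^^ k) y)" unfolding b_def by (rule normA_le_norm[OF pA KA(2) KA(1)])
      also have "\<dots> \<le> sqrt KA * (KB ^ k * norm y)" using nB[of k] by (rule mult_left_mono) (use KA(1) in simp)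
      finally show ?thesis by (simp add: algebra_simps)
    qed
    have lc: "(b (Suc k))\<^sup>2 \<le> b k * b (Suc (Suc k))" for k
    proof -
      define z where "z = (B ^^ k) y"
      have "(b (Suc k))\<^sup>2 = Re (cinner (A (B z)) (B z))" by (simp add: b_def z_def normA_sq[OF pA])
      also have "\<dots> = Re (cinner (A z) (B (B z)))" by (simp add: Bsym)
      also have "\<dots> \<le> cmod (cinner (A z) (B (B z)))" by (rule complex_Re_le_cmod)
      also have "\<dots> \<le> normA A z * normA A (B (B z))" by (rule CS_A[OF pA])
      also have "\<dots> = b k * b (Suc (Suc k))" by (simp add: b_def z_def)
      finally show ?thesis .
    qed
    have b1: "b 1 \<le> KB * b 0" by (rule logconv_bound[OF nn lc ub KB(1)])
    have "(normA A (S y))\<^sup>2 = Re (cinner (A (S y)) (S y))" by (rule normA_sq[OF pA])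
    also have "\<dots> = Re (cinner (A y) (B y))" by (simp add: S0 B_def)
    also have "\<dots> \<le> cmod (cinner (A y) (B y))" by (rule complex_Re_le_cmod)
    also have "\<dots> \<le> normA A y * normA A (B y)" by (rule CS_A[OF pA])
    also have "\<dots> = b 0 * b 1" by (simp add: b_def)
    also have "\<dots> \<le> b 0 * (KB * b 0)" using b1 nn[of 0] by (rule mult_left_mono)
    also have "\<dots> = KB * (normA A y)\<^sup>2" by (simp add: b_def power2_eq_square)
    finally show ?thesis .
  qed
  thus ?thesis using KB(1) by (intro exI[of _ KB]) auto
qed


lemma exists_unit:
  fixes A :: "'a::complex_hilbert \<Rightarrow> 'a"
  assumes pA: "positive_op A" and nz: "A \<noteq> (\<lambda>x. 0)"
  shows "\<exists>x. normA A x = 1"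
proof -
  have bA: "bounded_op A" using pA by (simp add: positive_op_def)
  obtain x0 where x0: "A x0 \<noteq> 0" using nz by auto
  define qq where "qq = Re (cinner (A x0) x0)"
  have qq0: "0 \<le> qq" using pA by (simp add: qq_def positive_Re_nonneg)
  have "qq \<noteq> 0"
  proof
    assume "qq = 0"
    hence "normA A x0 = 0" by (simp add: normA_def qq_def)
    hence "cmod (cinner (A x0) (A x0)) \<le> 0" using CS_A[OF pA, of x0 "A x0"] by simp
    hence "A x0 = 0" by (simp add: cinner_self_zero_iff)
    thus False using x0 by simp
  qed
  hence qp: "qq > 0" using qq0 by simp
  define t where "t = 1 / sqrt qq"
  define x where "x = complex_of_real t *\<^sub>C x0"
  have "cinner (A x) x = complex_of_real t * complex_of_real t * cinner (A x0) x0"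
    by (simp add: x_def bounded_op_scaleC[OF bA] cinner_scaleC_left cinner_scaleC_right)
  hence "Re (cinner (A x) x) = t * t * qq" by (simp add: qq_def)
  also have "\<dots> = 1" using qp by (simp add: t_def)
  finally show ?thesis by (intro exI[of _ x]) (simp add: normA_def)
qed

theorem corollary3p14:
  fixes A S :: "'a::complex_hilbert \<Rightarrow> 'a"
  assumes "positive_op A" and "A \<noteq> (\<lambda>x. 0)"
    and "S \<in> BA A"
  shows "(omegaA A S)\<^sup>2 \<le> (1 / sqrt 2) *
           omegaA A (\<lambda>x. sharpA A S (S x) + \<i> *\<^sub>C S (sharpA A S x))"
proof -
  note pA = assms(1)
  have bA: "bounded_op A" using pA by (simp add: positive_op_def)
  obtain C where C0: "C \<ge> 0" and C: "\<And>y. (normA A (S y))\<^sup>2 \<le> C * (normA A y)\<^sup>2"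
    using A_bounded[OF pA assms(3)] by auto
  define Sh where "Sh = sharpA A S"
  have sp: "\<And>x y. cinner (A (Sh x)) y = cinner (A x) (S y)"
    unfolding Sh_def using sharp_prop[OF pA assms(3)] .
  have sa: "\<And>a b. cinner (A a) b = cinner a (A b)" using positive_selfadj[OF pA] .
  define M where "M = (\<lambda>x. Sh (S x) + \<i> *\<^sub>C S (Sh x))"
  have nn: "\<And>z. 0 \<le> normA A z" by (simp add: normA_def positive_Re_nonneg[OF pA])
  have Sbd: "normA A (S y) \<le> sqrt C * normA A y" for y
  proof -
    have "(normA A (S y))\<^sup>2 \<le> (sqrt C * normA A y)\<^sup>2"
      using C[of y] C0 by (simp add: power_mult_distrib)
    thus ?thesis using nn C0 by (meson power2_le_imp_le mult_nonneg_nonneg real_sqrt_ge_zero)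
  qed
  have Shbd: "(normA A (Sh x))\<^sup>2 \<le> C * (normA A x)\<^sup>2" for x
  proof -
    have "(normA A (Sh x))\<^sup>2 = Re (cinner (A (Sh x)) (Sh x))" by (rule normA_sq[OF pA])
    also have "\<dots> = Re (cinner (A x) (S (Sh x)))" by (simp add: sp)
    also have "\<dots> \<le> cmod (cinner (A x) (S (Sh x)))" by (rule complex_Re_le_cmod)
    also have "\<dots> \<le> normA A x * normA A (S (Sh x))" by (rule CS_A[OF pA])
    also have "\<dots> \<le> normA A x * (sqrt C * normA A (Sh x))" using Sbd nn by (simp add: mult_left_mono)
    finally have h: "(normA A (Sh x))\<^sup>2 \<le> normA A (Sh x) * (sqrt C * normA A x)"
      by (simp add: algebra_simps)
    have "normA A (Sh x) \<le> sqrt C * normA A x"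
    proof (cases "normA A (Sh x) = 0")
      case True thus ?thesis using nn C0 by simp
    next
      case False
      hence "normA A (Sh x) > 0" using nn[of "Sh x"] by simp
      thus ?thesis using h by (simp add: power2_eq_square mult_le_cancel_left)
    qed
    hence "(normA A (Sh x))\<^sup>2 \<le> (sqrt C * normA A x)\<^sup>2" using nn by (simp add: power_mono)
    thus ?thesis using C0 by (simp add: power_mult_distrib)
  qed
  define a where "a = (\<lambda>x. (normA A (S x))\<^sup>2)"
  define b where "b = (\<lambda>x. (normA A (Sh x))\<^sup>2)"
  have eM: "cinnerA A (M x) x = complex_of_real (a x) + \<i> * complex_of_real (b x)" for x
  proof -
    have e1: "cinner (A (Sh (S x))) x = complex_of_real (a x)"
      using sp[of "S x" x] positive_real[OF pA, of "S x"] by (simp add: a_def normA_sq[OF pA])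
    have "cinner (A (S (Sh x))) x = cinner (S (Sh x)) (A x)" by (rule sa)
    also have "\<dots> = cnj (cinner (A x) (S (Sh x)))" by (rule cinner_commute)
    also have "\<dots> = cnj (cinner (A (Sh x)) (Sh x))" by (simp add: sp)
    also have "\<dots> = complex_of_real (b x)"
    proof -
      have "cinner (A (Sh x)) (Sh x) = complex_of_real (b x)"
        using positive_real[OF pA, of "Sh x"] by (simp add: b_def normA_sq[OF pA])
      thus ?thesis by simp
    qed
    finally have e2: "cinner (A (S (Sh x))) x = complex_of_real (b x)" .
    show ?thesis using e1 e2
      by (simp add: cinnerA_def M_def bounded_op_add[OF bA] bounded_op_scaleC[OF bA] cinner_add_left
          cinner_scaleC_left)
  qed
  have cM: "cmod (cinnerA A (M x) x) = sqrt ((a x)\<^sup>2 + (b x)\<^sup>2)" for x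
    by (simp add: eM cmod_def)
  have a0: "0 \<le> a x" and b0: "0 \<le> b x" for x by (simp_all add: a_def b_def)
  define XS where "XS = {cmod (cinnerA A (S x) x) | x. normA A x = 1}"
  define XM where "XM = {cmod (cinnerA A (M x) x) | x. normA A x = 1}"
  obtain x1 where x1: "normA A x1 = 1" using exists_unit[OF pA assms(2)] by auto
  have XSne: "XS \<noteq> {}" and XMne: "XM \<noteq> {}" using x1 by (auto simp: XS_def XM_def)
  have XMbdd: "bdd_above XM"
  proof (rule bdd_aboveI[of _ "2 * C"])
    fix t assume "t \<in> XM"
    then obtain x where x: "normA A x = 1" "t = cmod (cinnerA A (M x) x)" by (auto simp: XM_def)
    have "a x \<le> C" using C[of x] x(1) by (simp add: a_def)
    moreover have "b x \<le> C" using Shbd[of x] x(1) by (simp add: b_def)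
    moreover have "sqrt ((a x)\<^sup>2 + (b x)\<^sup>2) \<le> a x + b x"
      using a0[of x] b0[of x] by (intro real_le_lsqrt) (auto simp: power2_eq_square algebra_simps)
    ultimately show "t \<le> 2 * C" using x(2) cM[of x] by simp
  qed
  define W where "W = Sup XM"
  have qb: "(cmod (cinnerA A (S x) x))\<^sup>2 \<le> (1 / sqrt 2) * W" if x: "normA A x = 1" for x
  proof -
    define q where "q = cmod (cinnerA A (S x) x)"
    have "q \<le> normA A (S x) * normA A x" unfolding q_def cinnerA_def by (rule CS_A[OF pA])
    hence "q\<^sup>2 \<le> a x" using x by (simp add: a_def q_def power_mono)
    moreover have "q \<le> normA A (Sh x) * normA A x"
    proof -
      have "cinner (A (Sh x)) x = cnj (cinner (A (S x)) x)"
        using sp[of x x] sa[of x "S x"] by (metis cinner_commute)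
      hence "q = cmod (cinner (A (Sh x)) x)" by (simp add: q_def cinnerA_def)
      thus ?thesis using CS_A[OF pA, of "Sh x" x] by simp
    qed
    hence "q\<^sup>2 \<le> b x" using x by (simp add: b_def q_def power_mono)
    ultimately have "q\<^sup>2 \<le> (a x + b x) / 2" by simp
    also have "\<dots> \<le> sqrt (((a x)\<^sup>2 + (b x)\<^sup>2) / 2)"
    proof (rule real_le_rsqrt)
      have "0 \<le> (a x - b x)\<^sup>2" by simp
      thus "((a x + b x) / 2)\<^sup>2 \<le> ((a x)\<^sup>2 + (b x)\<^sup>2) / 2"
        by (simp add: power2_eq_square field_simps algebra_simps)
    qed
    also have "\<dots> = (1 / sqrt 2) * cmod (cinnerA A (M x) x)"
      by (simp add: cM real_sqrt_divide)
    also have "\<dots> \<le> (1 / sqrt 2) * W"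
      unfolding W_def using XMbdd x by (intro mult_left_mono cSup_upper) (auto simp: XM_def)
    finally show ?thesis by (simp add: q_def)
  qed
  have W0: "0 \<le> W" unfolding W_def
    using XMbdd x1 by (intro order_trans[OF _ cSup_upper[of "cmod (cinnerA A (M x1) x1)"]]) (auto simp: XM_def)
  define R where "R = sqrt ((1 / sqrt 2) * W)"
  have XSle: "\<forall>t\<in>XS. t \<le> R"
  proof
    fix t assume "t \<in> XS"
    then obtain x where x: "normA A x = 1" "t = cmod (cinnerA A (S x) x)" by (auto simp: XS_def)
    have "t = sqrt (t\<^sup>2)" using x(2) by simp
    also have "\<dots> \<le> R" unfolding R_def using real_sqrt_le_mono[OF qb[OF x(1)]] x(2) by simp
    finally show "t \<le> R" .
  qed
  have up: "Sup XS \<le> R" using XSne XSle by (intro cSup_least) auto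
  have lo: "0 \<le> Sup XS"
    using XSle x1 by (intro order_trans[OF _ cSup_upper[of "cmod (cinnerA A (S x1) x1)"]])
      (auto simp: XS_def bdd_above_def)
  have "(Sup XS)\<^sup>2 \<le> R\<^sup>2" using up lo by (simp add: power_mono)
  also have "\<dots> = (1 / sqrt 2) * W" unfolding R_def using W0 by simp
  finally show ?thesis by (simp add: omegaA_def XS_def W_def XM_def M_def Sh_def)
qed

end
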